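(* Let $\mathcal{N}$ be a Beeping Network with $n$ nodes and maximum degree $\Delta$, where each node has a unique ID from $[1,n^c]$ for a constant $c\ge1$ and each node knows $n$, $c$ and $\Delta$. Then the Maximal Independent Set problem can be solved deterministically on $\mathcal{N}$ in $O(\Delta^2\,\mathrm{polylog}\, n)$ beeping rounds.
   Context: A Beeping Network is a network of $n$ nodes whose topology is an undirected graph $G=(V,E)$. Time is divided into synchronous rounds and all nodes start simultaneously. In each round every node either beeps or listens; a listening node hears "silence" if no neighbor beeps and "noise" if at least one neighbor beeps, and cannot distinguish one beep from several. An independent set is $S\subseteq V$ with no edge between any two of its nodes; it is maximal if it is not contained in a larger independent set. The Maximal Independent Set problem is solved when, for some maximal independent set $S$, every node of $S$ knows that it is in $S$. *)

theory Defs
  imports Complex_Main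
begin

definition simple_graph :: "'v set \<Rightarrow> ('v \<Rightarrow> 'v \<Rightarrow> bool) \<Rightarrow> bool" where
  "simple_graph V E \<longleftrightarrow> finite V \<and> (\<forall>u v. E u v \<longrightarrow> u \<in> V \<and> v \<in> V)
     \<and> (\<forall>u v. E u v \<longrightarrow> E v u) \<and> (\<forall>v. \<not> E v v)"

definition degree :: "'v set \<Rightarrow> ('v \<Rightarrow> 'v \<Rightarrow> bool) \<Rightarrow> 'v \<Rightarrow> nat" where
  "degree V E v = card {u \<in> V. E v u}"

definition max_degree :: "'v set \<Rightarrow> ('v \<Rightarrow> 'v \<Rightarrow> bool) \<Rightarrow> nat" where
  "max_degree V E = Max (degree V E ` V)"

definition independent_set :: "'v set \<Rightarrow> ('v \<Rightarrow> 'v \<Rightarrow> bool) \<Rightarrow> 'v set \<Rightarrow> bool" where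
  "independent_set V E S \<longleftrightarrow> S \<subseteq> V \<and> (\<forall>u\<in>S. \<forall>v\<in>S. \<not> E u v)"

definition maximal_independent_set :: "'v set \<Rightarrow> ('v \<Rightarrow> 'v \<Rightarrow> bool) \<Rightarrow> 'v set \<Rightarrow> bool" where
  "maximal_independent_set V E S \<longleftrightarrow> independent_set V E S \<and>
     (\<forall>S'. independent_set V E S' \<and> S \<subseteq> S' \<longrightarrow> S' = S)"

text \<open>A deterministic beeping algorithm: in each round, a node decides whether to beep
  as a function of its ID, the known parameters n, c, \<Delta> and its own history of
  observations so far (one boolean per past round: True = heard noise while listening;
  a beeping node records False, it hears nothing). Parameters are passed as
  ID, n, c, \<Delta>, history.\<close>
type_synonym beep_alg = "nat \<Rightarrow> nat \<Rightarrow> nat \<Rightarrow> nat \<Rightarrow> bool list \<Rightarrow> bool"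

text \<open>Histories of all nodes after t synchronous rounds (all nodes start simultaneously).\<close>
fun histories :: "beep_alg \<Rightarrow> ('v \<Rightarrow> 'v \<Rightarrow> bool) \<Rightarrow> ('v \<Rightarrow> nat) \<Rightarrow> nat \<Rightarrow> nat \<Rightarrow> nat
    \<Rightarrow> nat \<Rightarrow> 'v \<Rightarrow> bool list" where
  "histories A E ident n c \<Delta> 0 = (\<lambda>v. [])"
| "histories A E ident n c \<Delta> (Suc t) =
     (let h = histories A E ident n c \<Delta> t;
          beeps = (\<lambda>u. A (ident u) n c \<Delta> (h u))
      in (\<lambda>v. h v @ [\<not> beeps v \<and> (\<exists>u. E v u \<and> beeps u)]))"

definition solves_MIS_in ::
  "beep_alg \<Rightarrow> (nat \<Rightarrow> nat \<Rightarrow> nat \<Rightarrow> nat \<Rightarrow> bool list \<Rightarrow> bool) \<Rightarrow> nat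
     \<Rightarrow> 'v set \<Rightarrow> ('v \<Rightarrow> 'v \<Rightarrow> bool) \<Rightarrow> ('v \<Rightarrow> nat) \<Rightarrow> nat \<Rightarrow> nat \<Rightarrow> nat \<Rightarrow> bool" where
  "solves_MIS_in A out T V E ident n c \<Delta> \<longleftrightarrow>
     maximal_independent_set V E
       {v \<in> V. out (ident v) n c \<Delta> (histories A E ident n c \<Delta> T v)}"

end

theory Submission
  imports Defs "HOL-Library.FuncSet" "HOL-Library.Discrete_Functions"
begin


lemma bad_card:
  fixes w0 :: "nat \<Rightarrow> nat"
  assumes "j \<le> L" "q > 0"
  shows "card {w \<in> PiE {..<L} (\<lambda>_. {..<q}). j \<le> card {i. i < L \<and> w i = w0 i}} \<le> L ^ j * q ^ (L - j)"
proof -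
  let ?SS = "{S. S \<subseteq> {..<L} \<and> card S = j}"
  let ?P = "\<lambda>S. PiE {..<L} (\<lambda>i. if i \<in> S then {w0 i} else {..<q})"
  let ?B = "{w \<in> PiE {..<L} (\<lambda>_. {..<q}). j \<le> card {i. i < L \<and> w i = w0 i}}"
  have sub: "?B \<subseteq> (\<Union>S\<in>?SS. ?P S)"
  proof
    fix w assume w: "w \<in> ?B"
    then have wP: "w \<in> PiE {..<L} (\<lambda>_. {..<q})" and wj: "j \<le> card {i. i < L \<and> w i = w0 i}"
      by auto
    from wj obtain S where S: "S \<subseteq> {i. i < L \<and> w i = w0 i}" "card S = j" "finite S"
      by (rule obtain_subset_with_card_n)
    have "w \<in> ?P S"
      unfolding PiE_iff
    proof
      show "\<forall>i\<in>{..<L}. w i \<in> (if i \<in> S then {w0 i} else {..<q})"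
        using S(1) wP unfolding PiE_iff by auto
      show "w \<in> extensional {..<L}" using wP unfolding PiE_iff by blast
    qed
    moreover have "S \<in> ?SS" using S by auto
    ultimately show "w \<in> (\<Union>S\<in>?SS. ?P S)" by blast
  qed
  have cP: "card (?P S) = q ^ (L - j)" if "S \<in> ?SS" for S
  proof -
    have SL: "S \<subseteq> {..<L}" "card S = j" using that by auto
    have "card (?P S) = (\<Prod>i\<in>{..<L}. card (if i \<in> S then {w0 i} else {..<q}))"
      by (simp add: card_PiE)
    also have "\<dots> = (\<Prod>i\<in>{..<L}. (if i \<in> S then 1 else q))"
      by (intro prod.cong) auto
    also have "\<dots> = (\<Prod>i\<in>{..<L} \<inter> -S. q)"
      by (simp add: prod.If_cases)
    also have "\<dots> = q ^ card ({..<L} \<inter> -S)" by simp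
    also have "{..<L} \<inter> -S = {..<L} - S" by blast
    also have "card ({..<L} - S) = L - j"
      using SL by (simp add: card_Diff_subset finite_subset)
    finally show ?thesis .
  qed
  have fin: "finite ?SS" by (rule finite_subset[of _ "Pow {..<L}"]) auto
  have "card (\<Union>S\<in>?SS. ?P S) \<le> (\<Sum>S\<in>?SS. card (?P S))" using fin by (rule card_UN_le)
  also have "\<dots> = card ?SS * q ^ (L - j)" using cP by simp
  also have "card ?SS = L choose j" using n_subsets[of "{..<L}" j] by simp
  also have "L choose j \<le> L ^ j" using assms(1) by (rule binomial_le_pow)
  finally have c1: "card (\<Union>S\<in>?SS. ?P S) \<le> L ^ j * q ^ (L - j)" by simp
  have fin2: "finite (\<Union>S\<in>?SS. ?P S)" using fin by (simp add: finite_PiE)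
  have "card ?B \<le> card (\<Union>S\<in>?SS. ?P S)" by (rule card_mono[OF fin2 sub])
  then show ?thesis using c1 by linarith
qed

definition good_code :: "nat \<Rightarrow> nat \<Rightarrow> nat \<Rightarrow> (nat \<Rightarrow> nat \<Rightarrow> nat) \<Rightarrow> bool" where
  "good_code j L q cw \<longleftrightarrow> (\<forall>x i. cw x i < q) \<and>
     (\<forall>x y. x < 2^j \<longrightarrow> y < 2^j \<longrightarrow> x \<noteq> y \<longrightarrow> card {i. i < L \<and> cw x i = cw y i} < j)"

lemma code_step:
  fixes N :: nat
  assumes "j \<le> L" "1 \<le> j" "N < 2 ^ j" "\<forall>x i. cw x i < 2 * L"
  shows "\<exists>w. (\<forall>i. w i < 2 * L) \<and> (\<forall>x<N. card {i. i < L \<and> w i = cw x i} < j)"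
proof -
  let ?q = "2 * L"
  let ?W = "PiE {..<L} (\<lambda>_. {..<?q})"
  let ?B = "\<lambda>x. {w \<in> ?W. j \<le> card {i. i < L \<and> w i = cw x i}}"
  have Lpos: "L > 0" using assms(1,2) by linarith
  have qpos: "?q > 0" using Lpos by simp
  have finW: "finite ?W" by (rule finite_PiE) auto
  have finB: "finite (\<Union>x<N. ?B x)" by (rule finite_subset[OF _ finW]) blast
  have "card (\<Union>x<N. ?B x) \<le> (\<Sum>x<N. card (?B x))" by (rule card_UN_le) simp
  also have "\<dots> \<le> (\<Sum>x<N. L ^ j * ?q ^ (L - j))"
    by (rule sum_mono, rule bad_card[OF assms(1) qpos])
  also have "\<dots> = N * (L ^ j * ?q ^ (L - j))" by simp
  also have "\<dots> < 2 ^ j * (L ^ j * ?q ^ (L - j))"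
  proof -
    have pos: "0 < L ^ j * ?q ^ (L - j)" using Lpos by simp
    show ?thesis using assms(3) pos by simp
  qed
  also have "\<dots> = ?q ^ j * ?q ^ (L - j)"
  proof -
    have "?q ^ j = 2 ^ j * L ^ j" by (rule power_mult_distrib)
    then show ?thesis by (simp only: mult.assoc)
  qed
  also have "\<dots> = ?q ^ (j + (L - j))" by (rule power_add[symmetric])
  also have "j + (L - j) = L" using assms(1) by simp
  also have "?q ^ L = card ?W" by (simp add: card_PiE)
  finally have lt: "card (\<Union>x<N. ?B x) < card ?W" .
  have "\<not> ?W \<subseteq> (\<Union>x<N. ?B x)"
  proof
    assume "?W \<subseteq> (\<Union>x<N. ?B x)"
    then have "card ?W \<le> card (\<Union>x<N. ?B x)" by (rule card_mono[OF finB])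
    then show False using lt by linarith
  qed
  then obtain w where w: "w \<in> ?W" "w \<notin> (\<Union>x<N. ?B x)" by blast
  define w' where "w' = (\<lambda>i. if i < L then w i else 0)"
  have "\<forall>i. w' i < 2 * L"
  proof
    fix i show "w' i < 2 * L"
    proof (cases "i < L")
      case True then show ?thesis using w(1) unfolding w'_def PiE_iff by auto
    next
      case False then show ?thesis using qpos unfolding w'_def by simp
    qed
  qed
  moreover have "\<forall>x<N. card {i. i < L \<and> w' i = cw x i} < j"
  proof (intro allI impI)
    fix x assume "x < N"
    then have "\<not> j \<le> card {i. i < L \<and> w i = cw x i}" using w by blast
    moreover have "{i. i < L \<and> w' i = cw x i} = {i. i < L \<and> w i = cw x i}" by (auto simp: w'_def)
    ultimately show "card {i. i < L \<and> w' i = cw x i} < j" by simp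
  qed
  ultimately show ?thesis by blast
qed

lemma code_exists_aux:
  fixes N :: nat
  assumes "j \<le> L" "1 \<le> j"
  shows "N \<le> 2 ^ j \<Longrightarrow> \<exists>cw. (\<forall>x i. cw x i < 2 * L) \<and>
     (\<forall>x y. x < N \<longrightarrow> y < N \<longrightarrow> x \<noteq> y \<longrightarrow> card {i. i < L \<and> cw x i = cw y i} < j)"
proof (induction N)
  case 0
  show ?case by (rule exI[of _ "\<lambda>_ _. 0"]) (use assms in auto)
next
  case (Suc N)
  then obtain cw where cw: "\<forall>x i. cw x i < 2 * L"
     "\<forall>x y. x < N \<longrightarrow> y < N \<longrightarrow> x \<noteq> y \<longrightarrow> card {i. i < L \<and> cw x i = cw y i} < j" by auto
  obtain w where w: "\<forall>i. w i < 2 * L" "\<forall>x<N. card {i. i < L \<and> w i = cw x i} < j"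
    using code_step[OF assms _ cw(1), of N] Suc.prems by auto
  define cw' where "cw' = cw(N := w)"
  have "\<forall>x i. cw' x i < 2 * L" using cw w by (auto simp: cw'_def)
  moreover have "\<forall>x y. x < Suc N \<longrightarrow> y < Suc N \<longrightarrow> x \<noteq> y \<longrightarrow> card {i. i < L \<and> cw' x i = cw' y i} < j"
  proof (intro allI impI)
    fix x y assume xy: "x < Suc N" "y < Suc N" "x \<noteq> y"
    show "card {i. i < L \<and> cw' x i = cw' y i} < j"
    proof (cases "x = N")
      case True
      then show ?thesis using xy w(2) by (auto simp: cw'_def)
    next
      case False
      note xF = False
      show ?thesis
      proof (cases "y = N")
        case True
        have "{i. i < L \<and> cw' x i = cw' y i} = {i. i < L \<and> w i = cw x i}"
          using True xF by (auto simp: cw'_def)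
        then show ?thesis using w(2) xy xF by auto
      next
        case False
        then show ?thesis using xF xy cw(2) by (auto simp: cw'_def)
      qed
    qed
  qed
  ultimately show ?case by blast
qed

lemma code_exists:
  assumes "j \<le> L" "1 \<le> j"
  shows "\<exists>cw. good_code j L (2 * L) cw"
  using code_exists_aux[OF assms order_refl] unfolding good_code_def by blast


definition outb :: "nat \<Rightarrow> (nat \<Rightarrow> bool) \<Rightarrow> nat \<Rightarrow> bool" where
  "outb j f m \<longleftrightarrow> (\<exists>x<m. x mod Suc (2*j) = 2*j \<and> f x)"

fun Jf :: "nat \<Rightarrow> nat \<Rightarrow> (nat \<Rightarrow> nat \<Rightarrow> nat) \<Rightarrow> nat \<Rightarrow> (nat \<Rightarrow> bool) \<Rightarrow> nat \<Rightarrow> bool" where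
  "Jf j q cw idv f 0 = False"
| "Jf j q cw idv f (Suc s) = (Jf j q cw idv f s \<or>
     (\<not> outb j f (s * Suc (2*j)) \<and> cw idv (s div q) = s mod q \<and> (\<forall>k<2*j. \<not> f (s * Suc (2*j) + k))))"

definition cand :: "nat \<Rightarrow> nat \<Rightarrow> (nat \<Rightarrow> nat \<Rightarrow> nat) \<Rightarrow> nat \<Rightarrow> (nat \<Rightarrow> bool) \<Rightarrow> nat \<Rightarrow> bool" where
  "cand j q cw idv f s \<longleftrightarrow> \<not> Jf j q cw idv f s \<and> \<not> outb j f (s * Suc (2*j)) \<and> cw idv (s div q) = s mod q"

definition beepf :: "nat \<Rightarrow> nat \<Rightarrow> (nat \<Rightarrow> nat \<Rightarrow> nat) \<Rightarrow> nat \<Rightarrow> (nat \<Rightarrow> bool) \<Rightarrow> nat \<Rightarrow> bool" where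
  "beepf j q cw idv f t = (if t mod Suc (2*j) < 2*j
     then cand j q cw idv f (t div Suc (2*j)) \<and> (odd (idv div 2 ^ (t mod Suc (2*j) div 2)) = even (t mod Suc (2*j)))
     else Jf j q cw idv f (Suc (t div Suc (2*j))))"

lemma outb_cong: "(\<And>x. x < m \<Longrightarrow> f x = g x) \<Longrightarrow> outb j f m = outb j g m"
  unfolding outb_def by auto

lemma Jf_cong: "(\<And>x. x < s * Suc (2*j) \<Longrightarrow> f x = g x) \<Longrightarrow> Jf j q cw idv f s = Jf j q cw idv g s"
proof (induction s)
  case 0 then show ?case by simp
next
  case (Suc s)
  have a: "Jf j q cw idv f s = Jf j q cw idv g s" using Suc by auto
  have b: "outb j f (s * Suc (2*j)) = outb j g (s * Suc (2*j))" by (rule outb_cong) (use Suc.prems in auto)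
  have c: "(\<forall>k<2*j. \<not> f (s * Suc (2*j) + k)) = (\<forall>k<2*j. \<not> g (s * Suc (2*j) + k))"
    using Suc.prems by auto
  show ?case using a b c by simp
qed

lemma Jf_Suc_cong: "(\<And>x. x < s * Suc (2*j) + 2*j \<Longrightarrow> f x = g x) \<Longrightarrow> Jf j q cw idv f (Suc s) = Jf j q cw idv g (Suc s)"
proof -
  assume h: "\<And>x. x < s * Suc (2*j) + 2*j \<Longrightarrow> f x = g x"
  have a: "Jf j q cw idv f s = Jf j q cw idv g s" by (rule Jf_cong) (use h in auto)
  have b: "outb j f (s * Suc (2*j)) = outb j g (s * Suc (2*j))" by (rule outb_cong) (use h in auto)
  have c: "(\<forall>k<2*j. \<not> f (s * Suc (2*j) + k)) = (\<forall>k<2*j. \<not> g (s * Suc (2*j) + k))"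
    using h by auto
  show ?thesis using a b c by simp
qed

lemma beepf_cong: "(\<And>x. x < t \<Longrightarrow> f x = g x) \<Longrightarrow> beepf j q cw idv f t = beepf j q cw idv g t"
proof -
  assume h: "\<And>x. x < t \<Longrightarrow> f x = g x"
  define s where "s = t div Suc (2*j)"
  define r where "r = t mod Suc (2*j)"
  have t: "t = s * Suc (2*j) + r" unfolding s_def r_def by (metis div_mult_mod_eq)
  have r: "r < Suc (2*j)" unfolding r_def by simp
  show ?thesis
  proof (cases "r < 2*j")
    case True
    have a: "Jf j q cw idv f s = Jf j q cw idv g s" by (rule Jf_cong) (use h t in auto)
    have b: "outb j f (s * Suc (2*j)) = outb j g (s * Suc (2*j))" by (rule outb_cong) (use h t in auto)
    show ?thesis using True a b unfolding beepf_def cand_def s_def[symmetric] r_def[symmetric] by simp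
  next
    case False
    then have "r = 2*j" using r by simp
    then have a: "Jf j q cw idv f (Suc s) = Jf j q cw idv g (Suc s)" by (intro Jf_Suc_cong) (use h t in auto)
    show ?thesis using False a unfolding beepf_def s_def[symmetric] r_def[symmetric] by simp
  qed
qed

lemma bits_differ:
  fixes x y :: nat
  shows "x < 2^j \<Longrightarrow> y < 2^j \<Longrightarrow> x \<noteq> y \<Longrightarrow> \<exists>b<j. odd (x div 2^b) \<noteq> odd (y div 2^b)"
proof (induction j arbitrary: x y)
  case 0 then show ?case by simp
next
  case (Suc j)
  show ?case
  proof (cases "odd x = odd y")
    case False then show ?thesis by (intro exI[of _ 0]) auto
  next
    case True
    have "x div 2 \<noteq> y div 2"
    proof
      assume "x div 2 = y div 2"
      moreover have "x mod 2 = y mod 2" using True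
        by (cases "even x") (auto simp: even_iff_mod_2_eq_zero odd_iff_mod_2_eq_one)
      moreover have "x = x div 2 * 2 + x mod 2" "y = y div 2 * 2 + y mod 2" by simp_all
      ultimately have "x = y" by metis
      then show False using Suc.prems by simp
    qed
    moreover have "x div 2 < 2^j" "y div 2 < 2^j" using Suc.prems by auto
    ultimately obtain b where "b < j" "odd (x div 2 div 2^b) \<noteq> odd (y div 2 div 2^b)"
      using Suc.IH by blast
    then show ?thesis by (intro exI[of _ "Suc b"]) (auto simp: div_mult2_eq)
  qed
qed


lemma modR: "k < m \<Longrightarrow> (s*m+k) mod (m::nat) = k" "k < m \<Longrightarrow> (s*m+k) div (m::nat) = s"
  by simp_all

locale net =
  fixes V :: "'v set" and E :: "'v \<Rightarrow> 'v \<Rightarrow> bool" and ident :: "'v \<Rightarrow> nat"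
    and A :: beep_alg and n c \<Delta> j q L :: nat and cw :: "nat \<Rightarrow> nat \<Rightarrow> nat"
  assumes sg: "simple_graph V E" and inj: "inj_on ident V"
    and idb: "\<And>v. v \<in> V \<Longrightarrow> ident v < 2^j"
    and deg: "\<And>v. v \<in> V \<Longrightarrow> card {u\<in>V. E v u} \<le> \<Delta>"
    and cwq: "\<And>x i. cw x i < q"
    and agr: "\<And>x y. x < 2^j \<Longrightarrow> y < 2^j \<Longrightarrow> x \<noteq> y \<Longrightarrow> card {i. i < L \<and> cw x i = cw y i} < j"
    and Lbig: "\<Delta> * (j - 1) < L" and j1: "1 \<le> j"
    and Adef: "\<And>x h. A x n c \<Delta> h = beepf j q cw x (nth h) (length h)"
begin

abbreviation H where "H t \<equiv> histories A E ident n c \<Delta> t"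
definition hrd where "hrd x v = H (Suc x) v ! x"
abbreviation R where "R \<equiv> Suc (2*j)"
definition bp where "bp t v = beepf j q cw (ident v) (\<lambda>x. hrd x v) t"
definition J where "J v s = Jf j q cw (ident v) (\<lambda>x. hrd x v) s"
definition Ob where "Ob v m = outb j (\<lambda>x. hrd x v) m"
definition Cd where "Cd v s = cand j q cw (ident v) (\<lambda>x. hrd x v) s"

lemma H_Suc: "H (Suc t) v = H t v @ [\<not> A (ident v) n c \<Delta> (H t v) \<and> (\<exists>u. E v u \<and> A (ident u) n c \<Delta> (H t u))]"
  by (simp add: Let_def)

lemma H_len: "length (H t v) = t"
  by (induction t) (auto simp: H_Suc simp del: histories.simps(2))

lemma H_nth: "x < t \<Longrightarrow> H t v ! x = hrd x v"
proof (induction t)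
  case 0 then show ?case by simp
next
  case (Suc t)
  show ?case
  proof (cases "x < t")
    case True
    then show ?thesis using Suc by (simp add: H_Suc nth_append H_len del: histories.simps)
  next
    case False
    then have "x = t" using Suc by simp
    then show ?thesis by (simp add: hrd_def)
  qed
qed

lemma A_bp: "A (ident v) n c \<Delta> (H t v) = bp t v"
  unfolding Adef bp_def H_len by (rule beepf_cong) (simp add: H_nth)

lemma hrd_eq: "hrd t v = (\<not> bp t v \<and> (\<exists>u. E v u \<and> bp t u))"
proof -
  have "hrd t v = (H t v @ [\<not> A (ident v) n c \<Delta> (H t v) \<and> (\<exists>u. E v u \<and> A (ident u) n c \<Delta> (H t u))]) ! t"
    unfolding hrd_def H_Suc ..
  also have "\<dots> = (\<not> A (ident v) n c \<Delta> (H t v) \<and> (\<exists>u. E v u \<and> A (ident u) n c \<Delta> (H t u)))"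
    by (simp add: nth_append H_len del: histories.simps)
  finally show ?thesis by (simp add: A_bp)
qed

lemma bp_det: "k < 2*j \<Longrightarrow> bp (s * R + k) v = (Cd v s \<and> (odd (ident v div 2^(k div 2)) = even k))"
proof -
  assume k: "k < 2*j"
  have m: "(s * R + k) mod R = k" using k by (intro modR) simp
  have d: "(s * R + k) div R = s" using k by (intro modR) simp
  show ?thesis unfolding bp_def beepf_def Cd_def m d using k by simp
qed

lemma bp_not: "bp (s * R + 2*j) v = J v (Suc s)"
proof -
  have m: "(s * R + 2*j) mod R = 2*j" by (intro modR) simp
  have d: "(s * R + 2*j) div R = s" by (intro modR) simp
  show ?thesis unfolding bp_def beepf_def J_def m d by simp
qed

lemma J_Suc: "J v (Suc s) = (J v s \<or> (Cd v s \<and> (\<forall>k<2*j. \<not> hrd (s*R+k) v)))"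
  unfolding J_def Cd_def cand_def Ob_def by auto

lemma Cd_eq: "Cd v s = (\<not> J v s \<and> \<not> Ob v (s*R) \<and> cw (ident v) (s div q) = s mod q)"
  unfolding J_def Cd_def cand_def Ob_def by auto

lemma J_mono: "s \<le> s' \<Longrightarrow> J v s \<Longrightarrow> J v s'"
proof (induction s' rule: dec_induct)
  case base then show ?case .
next
  case (step m) then show ?case using J_Suc by auto
qed

lemma Ob_mono: "m \<le> m' \<Longrightarrow> Ob v m \<Longrightarrow> Ob v m'"
  unfolding Ob_def outb_def using order_less_le_trans by blast

lemma first_join: "J v M \<Longrightarrow> \<exists>s<M. \<not> J v s \<and> J v (Suc s)"
proof (induction M)
  case 0 then show ?case by (simp add: J_def)
next
  case (Suc M)
  then show ?case by (cases "J v M") (auto intro: less_SucI)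
qed

lemma E_sym: "E u v \<Longrightarrow> E v u" using sg unfolding simple_graph_def by blast
lemma E_V: "E u v \<Longrightarrow> u \<in> V \<and> v \<in> V" using sg unfolding simple_graph_def by blast
lemma E_irr: "\<not> E v v" using sg unfolding simple_graph_def by blast

lemma joined_info: "\<not> J v s \<Longrightarrow> J v (Suc s) \<Longrightarrow> Cd v s \<and> (\<forall>k<2*j. \<not> hrd (s*R+k) v)"
  using J_Suc by auto

lemma indep_less:
  assumes "E u v" "\<not> J u su" "J u (Suc su)" "\<not> J v sv" "J v (Suc sv)" "su < sv"
  shows False
proof -
  have "bp (su * R + 2*j) u" using assms(3) bp_not by simp
  moreover have "\<not> J v (Suc su)" using assms(4,6) J_mono by (meson Suc_leI)
  then have "\<not> bp (su * R + 2*j) v" using bp_not by simp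
  ultimately have h: "hrd (su * R + 2*j) v" using hrd_eq E_sym[OF assms(1)] by blast
  have "su * R + 2*j < sv * R"
  proof -
    have "su * R + 2*j < Suc su * R" by simp
    also have "\<dots> \<le> sv * R" using assms(6) by (intro mult_le_mono1) simp
    finally show ?thesis .
  qed
  moreover have "(su * R + 2*j) mod R = 2*j" by (intro modR) simp
  ultimately have "Ob v (sv * R)" using h unfolding Ob_def outb_def by blast
  then have "\<not> Cd v sv" using Cd_eq by simp
  then show False using joined_info[OF assms(4,5)] by simp
qed

lemma indep_same:
  assumes "E u v" "u \<in> V" "v \<in> V" "Cd u s" "Cd v s"
    "\<forall>k<2*j. \<not> hrd (s*R+k) u" "\<forall>k<2*j. \<not> hrd (s*R+k) v"
  shows False
proof -
  have "u \<noteq> v" using assms(1) E_irr by auto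
  then have "ident u \<noteq> ident v" using inj assms(2,3) by (meson inj_onD)
  then obtain b where b: "b < j" "odd (ident u div 2^b) \<noteq> odd (ident v div 2^b)"
    using bits_differ[OF idb[OF assms(2)] idb[OF assms(3)]] by blast
  have Ev: "E v u" using E_sym[OF assms(1)] .
  show False
  proof (cases "odd (ident u div 2^b)")
    case True
    have k: "2*b < 2*j" "2*b div 2 = b" "even (2*b)" using b(1) by auto
    have "bp (s*R+2*b) u" using bp_det[OF k(1), of s u] assms(4) k(2,3) True by simp
    moreover have "\<not> bp (s*R+2*b) v" using bp_det[OF k(1), of s v] k(2,3) True b(2) by simp
    ultimately have "hrd (s*R+2*b) v" using hrd_eq Ev by blast
    then show False using assms(7) k(1) by blast
  next
    case False
    have k: "Suc (2*b) < 2*j" "Suc (2*b) div 2 = b" "\<not> even (Suc (2*b))" using b(1) by auto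
    have "bp (s*R+Suc (2*b)) u" using bp_det[OF k(1), of s u] assms(4) k(2,3) False by simp
    moreover have "\<not> bp (s*R+Suc (2*b)) v" using bp_det[OF k(1), of s v] k(2,3) False b(2) by simp
    ultimately have "hrd (s*R+Suc (2*b)) v" using hrd_eq Ev by blast
    then show False using assms(7) k(1) by blast
  qed
qed

lemma indep: assumes "E u v" "J u M" "J v M" shows False
proof -
  obtain su where su: "\<not> J u su" "J u (Suc su)" using first_join[OF assms(2)] by blast
  obtain sv where sv: "\<not> J v sv" "J v (Suc sv)" using first_join[OF assms(3)] by blast
  have uv: "u \<in> V" "v \<in> V" using E_V[OF assms(1)] by auto
  consider "su < sv" | "sv < su" | "su = sv" by linarith
  then show False
  proof cases
    case 1 then show ?thesis using indep_less[OF assms(1) su sv] by blast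
  next
    case 2 then show ?thesis using indep_less[OF E_sym[OF assms(1)] sv su] by blast
  next
    case 3
    have a: "Cd u su" "\<forall>k<2*j. \<not> hrd (su*R+k) u" using joined_info[OF su] by auto
    have b: "Cd v su" "\<forall>k<2*j. \<not> hrd (su*R+k) v" using joined_info[OF sv] 3 by auto
    show ?thesis by (rule indep_same[OF assms(1) uv a(1) b(1) a(2) b(2)])
  qed
qed

lemma maximal:
  assumes v: "v \<in> V" and nj: "\<not> J v (L*q)"
  shows "\<exists>u\<in>V. E v u \<and> J u (L*q)"
proof (cases "Ob v (L*q*R)")
  case True
  then obtain x where x: "x < L*q*R" "x mod R = 2*j" "hrd x v" unfolding Ob_def outb_def by blast
  define s where "s = x div R"
  have "x = x div R * R + x mod R" by (rule div_mult_mod_eq[symmetric])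
  then have xs: "x = s*R + 2*j" unfolding s_def using x(2) by simp
  have sl: "s < L*q" unfolding s_def using x(1) by (simp add: less_mult_imp_div_less)
  obtain u where u: "E v u" "bp x u" using x(3) hrd_eq by blast
  have "bp (s*R + 2*j) u" using u(2) xs by (simp only:)
  then have "J u (Suc s)" by (simp only: bp_not)
  moreover have "Suc s \<le> L*q" using sl by simp
  ultimately have "J u (L*q)" using J_mono by blast
  then show ?thesis using u(1) E_V by blast
next
  case False
  let ?Nb = "{u\<in>V. E v u}"
  let ?iv = "ident v"
  let ?Ag = "\<lambda>u. {i. i < L \<and> cw ?iv i = cw (ident u) i}"
  have finV: "finite V" using sg unfolding simple_graph_def by blast
  have finNb: "finite ?Nb" using finV by simp
  have agu: "card (?Ag u) \<le> j - 1" if "u \<in> ?Nb" for u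
  proof -
    have "u \<noteq> v" using that E_irr by auto
    then have "ident v \<noteq> ident u" using inj v that by (auto dest: inj_onD)
    then have "card (?Ag u) < j" using agr idb v that by auto
    then show ?thesis by simp
  qed
  have "card (\<Union>u\<in>?Nb. ?Ag u) \<le> (\<Sum>u\<in>?Nb. card (?Ag u))" using finNb by (rule card_UN_le)
  also have "\<dots> \<le> (\<Sum>u\<in>?Nb. j - 1)" by (rule sum_mono) (rule agu)
  also have "\<dots> = card ?Nb * (j - 1)" by simp
  also have "\<dots> \<le> \<Delta> * (j - 1)" using deg[OF v] by (rule mult_le_mono1)
  also have "\<dots> < L" by (rule Lbig)
  finally have lt: "card (\<Union>u\<in>?Nb. ?Ag u) < card {..<L}" by simp
  have finU: "finite (\<Union>u\<in>?Nb. ?Ag u)" by (rule finite_subset[of _ "{..<L}"]) auto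
  have "\<not> {..<L} \<subseteq> (\<Union>u\<in>?Nb. ?Ag u)"
  proof
    assume "{..<L} \<subseteq> (\<Union>u\<in>?Nb. ?Ag u)"
    then have "card {..<L} \<le> card (\<Union>u\<in>?Nb. ?Ag u)" by (rule card_mono[OF finU])
    then show False using lt by linarith
  qed
  then obtain i where i: "i < L" "i \<notin> (\<Union>u\<in>?Nb. ?Ag u)" by blast
  define a where "a = cw ?iv i"
  have aq: "a < q" unfolding a_def by (rule cwq)
  define s where "s = i * q + a"
  have sdiv: "s div q = i" "s mod q = a" unfolding s_def using aq by (simp_all add: modR)
  have sl: "s < L*q"
  proof -
    have "s < i * q + q" unfolding s_def using aq by simp
    also have "\<dots> = Suc i * q" by simp
    also have "\<dots> \<le> L * q" using i(1) by (intro mult_le_mono1) simp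
    finally show ?thesis .
  qed
  have sle: "s \<le> L*q" using sl by simp
  have "\<not> J v s" using nj J_mono[OF sle] by blast
  moreover have "s*R \<le> L*q*R" using sle by (rule mult_le_mono1)
  then have "\<not> Ob v (s*R)" using False Ob_mono by blast
  ultimately have Cv: "Cd v s" using Cd_eq sdiv a_def by simp
  have nh: "\<forall>k<2*j. \<not> hrd (s*R+k) v"
  proof (intro allI impI notI)
    fix k assume k: "k < 2*j" "hrd (s*R+k) v"
    then obtain u where u: "E v u" "bp (s*R+k) u" using hrd_eq by blast
    then have "Cd u s" using bp_det[OF k(1)] by simp
    then have "cw (ident u) i = a" using Cd_eq sdiv by simp
    then have iA: "i \<in> ?Ag u" using i(1) a_def by simp
    have uN: "u \<in> ?Nb" using u(1) E_V by blast
    have "i \<in> (\<Union>u\<in>?Nb. ?Ag u)" using uN iA by (rule UN_I[where B="?Ag"])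
    then show False using i(2) by blast
  qed
  have "J v (Suc s)" using J_Suc Cv nh by blast
  moreover have "Suc s \<le> L*q" using sl by simp
  ultimately have "J v (L*q)" using J_mono by blast
  then show ?thesis using nj by blast
qed

lemma mis: "maximal_independent_set V E {v\<in>V. J v (L*q)}"
  unfolding maximal_independent_set_def independent_set_def
proof (intro conjI allI impI)
  show "{v \<in> V. J v (L * q)} \<subseteq> V" by blast
  show "\<forall>u\<in>{v \<in> V. J v (L * q)}. \<forall>v\<in>{v \<in> V. J v (L * q)}. \<not> E u v"
    using indep by blast
  fix S' assume S': "(S' \<subseteq> V \<and> (\<forall>u\<in>S'. \<forall>v\<in>S'. \<not> E u v)) \<and> {v \<in> V. J v (L * q)} \<subseteq> S'"
  show "S' = {v \<in> V. J v (L * q)}"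
  proof
    show "S' \<subseteq> {v \<in> V. J v (L * q)}"
    proof
      fix w assume w: "w \<in> S'"
      then have wV: "w \<in> V" using S' by blast
      show "w \<in> {v \<in> V. J v (L * q)}"
      proof (rule ccontr)
        assume "w \<notin> {v \<in> V. J v (L * q)}"
        then have "\<not> J w (L*q)" using wV by blast
        then obtain u where "u \<in> V" "E w u" "J u (L*q)" using maximal wV by blast
        then show False using S' w by blast
      qed
    qed
  qed (use S' in blast)
qed

lemma out_eq: "Jf j q cw (ident v) (nth (H (L*q*R) v)) (L*q) = J v (L*q)"
  unfolding J_def by (rule Jf_cong) (simp add: H_nth)

end



definition jj :: "nat \<Rightarrow> nat \<Rightarrow> nat" where "jj c n = c * Suc (floor_log n)"
definition LL :: "nat \<Rightarrow> nat \<Rightarrow> nat \<Rightarrow> nat" where "LL c n \<Delta> = Suc \<Delta> * jj c n"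
definition CW :: "nat \<Rightarrow> nat \<Rightarrow> nat \<Rightarrow> nat \<Rightarrow> nat \<Rightarrow> nat" where
  "CW c n \<Delta> = (SOME cw. good_code (jj c n) (LL c n \<Delta>) (2 * LL c n \<Delta>) cw)"
definition Alg :: beep_alg where
  "Alg x n c \<Delta> h = beepf (jj c n) (2 * LL c n \<Delta>) (CW c n \<Delta>) x (nth h) (length h)"
definition Outp :: "nat \<Rightarrow> nat \<Rightarrow> nat \<Rightarrow> nat \<Rightarrow> bool list \<Rightarrow> bool" where
  "Outp x n c \<Delta> h = Jf (jj c n) (2 * LL c n \<Delta>) (CW c n \<Delta>) x (nth h) (LL c n \<Delta> * (2 * LL c n \<Delta>))"
definition TT :: "nat \<Rightarrow> nat \<Rightarrow> nat \<Rightarrow> nat" where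
  "TT c n \<Delta> = LL c n \<Delta> * (2 * LL c n \<Delta>) * Suc (2 * jj c n)"

lemma jj_pos: "1 \<le> c \<Longrightarrow> 1 \<le> jj c n"
  unfolding jj_def by simp

lemma jj_le_LL: "jj c n \<le> LL c n \<Delta>"
  unfolding LL_def by simp

lemma CW_good: assumes "1 \<le> c" shows "good_code (jj c n) (LL c n \<Delta>) (2 * LL c n \<Delta>) (CW c n \<Delta>)"
  using code_exists[OF jj_le_LL jj_pos[OF assms]] unfolding CW_def by (rule someI_ex)

lemma id_bound:
  assumes "1 \<le> c" "1 \<le> n" "x \<le> n ^ c"
  shows "x < 2 ^ jj c n"
proof -
  have "n < 2 * 2 ^ floor_log n" by (rule floor_log_exp2_gt)
  then have a: "n < 2 ^ Suc (floor_log n)" by simp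
  have "n ^ c < (2 ^ Suc (floor_log n)) ^ c"
    using a assms(1) by (intro power_strict_mono) auto
  also have "\<dots> = 2 ^ (Suc (floor_log n) * c)" by (rule power_mult[symmetric])
  also have "Suc (floor_log n) * c = jj c n" unfolding jj_def by (rule mult.commute)
  finally show ?thesis using assms(3) by linarith
qed

lemma correct:
  fixes V :: "'v set"
  assumes c1: "1 \<le> c" and sg: "simple_graph V E" and ne: "V \<noteq> {}" and inj: "inj_on ident V"
    and ids: "ident ` V \<subseteq> {1 .. (card V) ^ c}"
  shows "solves_MIS_in Alg Outp (TT c (card V) (max_degree V E)) V E ident (card V) c (max_degree V E)"
proof -
  define n where "n = card V"
  define \<Delta> where "\<Delta> = max_degree V E"
  have finV: "finite V" using sg unfolding simple_graph_def by blast
  have n1: "1 \<le> n" using finV ne unfolding n_def by (simp add: Suc_leI card_gt_0_iff)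
  have good: "good_code (jj c n) (LL c n \<Delta>) (2 * LL c n \<Delta>) (CW c n \<Delta>)" by (rule CW_good[OF c1])
  interpret N: net V E ident Alg n c \<Delta> "jj c n" "2 * LL c n \<Delta>" "LL c n \<Delta>" "CW c n \<Delta>"
  proof
    show "simple_graph V E" by (rule sg)
    show "inj_on ident V" by (rule inj)
    show "ident v < 2 ^ jj c n" if "v \<in> V" for v
    proof -
      have "ident v \<le> n ^ c" using ids that unfolding n_def by auto
      then show ?thesis using id_bound[OF c1 n1] by blast
    qed
    show "card {u \<in> V. E v u} \<le> \<Delta>" if "v \<in> V" for v
    proof -
      have "card {u \<in> V. E v u} = degree V E v" unfolding degree_def by simp
      also have "\<dots> \<le> Max (degree V E ` V)" using finV that by (intro Max_ge) auto
      finally show ?thesis unfolding \<Delta>_def max_degree_def .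
    qed
    show "\<And>x i. CW c n \<Delta> x i < 2 * LL c n \<Delta>" using good unfolding good_code_def by blast
    show "\<And>x y. x < 2 ^ jj c n \<Longrightarrow> y < 2 ^ jj c n \<Longrightarrow> x \<noteq> y \<Longrightarrow>
        card {i. i < LL c n \<Delta> \<and> CW c n \<Delta> x i = CW c n \<Delta> y i} < jj c n"
      using good unfolding good_code_def by blast
    show "\<Delta> * (jj c n - 1) < LL c n \<Delta>"
    proof -
      have "\<Delta> * (jj c n - 1) \<le> \<Delta> * jj c n" by (rule mult_le_mono2) simp
      moreover have "LL c n \<Delta> = jj c n + \<Delta> * jj c n" unfolding LL_def by simp
      ultimately show ?thesis using jj_pos[OF c1, of n] by linarith
    qed
    show "1 \<le> jj c n" by (rule jj_pos[OF c1])
    show "\<And>x h. Alg x n c \<Delta> h = beepf (jj c n) (2 * LL c n \<Delta>) (CW c n \<Delta>) x (nth h) (length h)"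
      unfolding Alg_def ..
  qed
  have T: "TT c n \<Delta> = LL c n \<Delta> * (2 * LL c n \<Delta>) * Suc (2 * jj c n)" unfolding TT_def ..
  have "{v \<in> V. Outp (ident v) n c \<Delta> (histories Alg E ident n c \<Delta> (TT c n \<Delta>) v)}
      = {v \<in> V. N.J v (LL c n \<Delta> * (2 * LL c n \<Delta>))}"
    unfolding T Outp_def N.out_eq ..
  then show ?thesis using N.mis unfolding solves_MIS_in_def n_def \<Delta>_def by simp
qed

lemma TT_nat:
  assumes "1 \<le> c" "1 \<le> \<Delta>"
  shows "TT c n \<Delta> \<le> 24 * \<Delta>^2 * jj c n ^ 3"
proof -
  let ?j = "jj c n"
  have j1: "1 \<le> ?j" by (rule jj_pos[OF assms(1)])
  have L: "LL c n \<Delta> \<le> 2 * \<Delta> * ?j" unfolding LL_def using assms(2) by (intro mult_le_mono1) simp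
  have R: "Suc (2 * ?j) \<le> 3 * ?j" using j1 by simp
  have "TT c n \<Delta> \<le> (2 * \<Delta> * ?j) * (2 * (2 * \<Delta> * ?j)) * (3 * ?j)"
    unfolding TT_def using L R by (intro mult_le_mono) simp_all
  also have "\<dots> = 24 * \<Delta>^2 * ?j ^ 3" by (simp add: power2_eq_square power3_eq_cube)
  finally show ?thesis .
qed

lemma bound:
  assumes c1: "1 \<le> c" and n2: "2 \<le> n" and d1: "1 \<le> \<Delta>"
  shows "real (TT c n \<Delta>) \<le> 192 * real c ^ 3 * real \<Delta> ^ 2 * (log 2 (real n)) ^ 3"
proof -
  let ?l = "log 2 (real n)"
  let ?j = "jj c n"
  have l1: "1 \<le> ?l" using n2 by simp
  have fl: "real (floor_log n) \<le> ?l"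
  proof -
    have "floor_log n = nat \<lfloor>?l\<rfloor>" using n2 by (simp add: floor_log_altdef)
    moreover have "0 \<le> \<lfloor>?l\<rfloor>" using l1 by simp
    ultimately have "real (floor_log n) = real_of_int \<lfloor>?l\<rfloor>" by simp
    also have "\<dots> \<le> ?l" by (rule of_int_floor_le)
    finally show ?thesis .
  qed
  have jr: "real ?j \<le> 2 * real c * ?l"
  proof -
    have "real ?j = real c * (real (floor_log n) + 1)" unfolding jj_def by (simp add: algebra_simps)
    also have "\<dots> \<le> real c * (?l + ?l)" using fl l1 by (intro mult_left_mono) simp_all
    also have "\<dots> = 2 * real c * ?l" by simp
    finally show ?thesis .
  qed
  have "real (TT c n \<Delta>) \<le> real (24 * \<Delta>^2 * ?j ^ 3)" using TT_nat[OF c1 d1] by (simp only: of_nat_le_iff)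
  also have "\<dots> = 24 * real \<Delta> ^ 2 * real ?j ^ 3" by simp
  also have "\<dots> \<le> 24 * real \<Delta> ^ 2 * (2 * real c * ?l) ^ 3"
    using jr by (intro mult_left_mono power_mono) simp_all
  also have "\<dots> = 192 * real c ^ 3 * real \<Delta> ^ 2 * ?l ^ 3" by (simp add: power_mult_distrib)
  finally show ?thesis .
qed

theorem corollary1:
  fixes c :: nat
  assumes "c \<ge> 1"
  shows "\<exists>(A :: beep_alg) (out :: nat \<Rightarrow> nat \<Rightarrow> nat \<Rightarrow> nat \<Rightarrow> bool list \<Rightarrow> bool)
            (T :: nat \<Rightarrow> nat \<Rightarrow> nat) (C :: real) (k :: nat).
     (\<forall>n \<Delta>. n \<ge> 2 \<longrightarrow> \<Delta> \<ge> 1 \<longrightarrow> real (T n \<Delta>) \<le> C * real \<Delta> ^ 2 * (log 2 (real n)) ^ k) \<and>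
     (\<forall>(V :: 'v set) E ident.
        simple_graph V E \<longrightarrow> V \<noteq> {} \<longrightarrow>
        inj_on ident V \<longrightarrow> ident ` V \<subseteq> {1 .. (card V) ^ c} \<longrightarrow>
        solves_MIS_in A out (T (card V) (max_degree V E)) V E ident
          (card V) c (max_degree V E))"
proof (intro exI conjI allI impI)
  fix n \<Delta> :: nat assume "n \<ge> 2" "\<Delta> \<ge> 1"
  then show "real (TT c n \<Delta>) \<le> (192 * real c ^ 3) * real \<Delta> ^ 2 * (log 2 (real n)) ^ 3"
    using bound[OF assms] by simp
next
  fix V :: "'v set" and E ident
  assume "simple_graph V E" "V \<noteq> {}" "inj_on ident V" "ident ` V \<subseteq> {1 .. (card V) ^ c}"
  then show "solves_MIS_in Alg Outp (TT c (card V) (max_degree V E)) V E ident (card V) c (max_degree V E)"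
    using correct[OF assms] by blast
qed

end
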